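(* Let $\phi\in(\pi,2\pi)$ and $l>0$. For $r=l+\epsilon$ with $\epsilon>0$ sufficiently small, $$\sum_{k=3,4}\mathbf 1(C_k(\phi,l,r))\,g_k(\phi,l,r)=\mathbf 1(C_{34}(\phi,l,r))\,g_4(\phi,l,r).$$
   Context: Conditions: $C_3(\phi,l,r)$: $3\pi/2<\phi<2\pi$ and $l|\sin\phi|\le r$; $C_4(\phi,l,r)$: $\pi<\phi\le3\pi/2$ and $l\le r$; $C_{34}=C_3\cup C_4$; $\mathbf1$ is the indicator. With $\arcsin\in[-\pi/2,\pi/2]$, $[t]^+=\max(t,0)$, and all quantities evaluated at $(\phi,l,r)$: $\gamma=l\sin(2\pi-\phi)/r$, $\zeta_1=\phi-\pi-\arcsin\gamma$, $\zeta_2=\phi-\pi-(\pi-\arcsin\gamma)$, $g_{3,1}=-2\gamma^2+\frac{1}{\tan\phi}(2\arcsin\gamma-2\gamma\sqrt{1-\gamma^2})$, $g_{3,2}=\frac{1}{\tan\phi}(-2(-\arcsin\gamma-\phi+2\pi)-2\gamma\sqrt{1-\gamma^2}-\sin2\phi)-1+2\gamma^2+\cos2\phi$, $g_{3,3}=\frac{l^2\sin\phi}{2}(\zeta_1\cos\phi-\sin\phi(\log|\sin\phi|-\log\gamma))$, $g_{3,4}=\frac{l^2\sin\phi}{2}(\pi-2\arcsin\gamma)\cos\phi$, $g_3=lr(\cos([\zeta_2]^+)-\cos\zeta_1)-\frac{r^2}{8}g_{3,1}+(-\frac{r^2}{8}g_{3,2}+g_{3,4})\mathbf1(\zeta_2>0)+g_{3,3}\mathbf1(\zeta_2\le0)$,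 $g_4=lr(1-\cos\zeta_1)-\frac{r^2}{8}g_{3,1}+g_{3,3}$. *)

theory Defs
  imports Complex_Main
begin

definition C3 :: "real \<Rightarrow> real \<Rightarrow> real \<Rightarrow> bool" where
  "C3 \<phi> l r \<longleftrightarrow> 3*pi/2 < \<phi> \<and> \<phi> < 2*pi \<and> l * \<bar>sin \<phi>\<bar> \<le> r"

definition C4 :: "real \<Rightarrow> real \<Rightarrow> real \<Rightarrow> bool" where
  "C4 \<phi> l r \<longleftrightarrow> pi < \<phi> \<and> \<phi> \<le> 3*pi/2 \<and> l \<le> r"

definition C34 :: "real \<Rightarrow> real \<Rightarrow> real \<Rightarrow> bool" where
  "C34 \<phi> l r \<longleftrightarrow> C3 \<phi> l r \<or> C4 \<phi> l r"

definition pospart :: "real \<Rightarrow> real" where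
  "pospart t = max t 0"

definition gam :: "real \<Rightarrow> real \<Rightarrow> real \<Rightarrow> real" where
  "gam \<phi> l r = l * sin (2*pi - \<phi>) / r"

definition zeta1 :: "real \<Rightarrow> real \<Rightarrow> real \<Rightarrow> real" where
  "zeta1 \<phi> l r = \<phi> - pi - arcsin (gam \<phi> l r)"

definition zeta2 :: "real \<Rightarrow> real \<Rightarrow> real \<Rightarrow> real" where
  "zeta2 \<phi> l r = \<phi> - pi - (pi - arcsin (gam \<phi> l r))"

definition g31 :: "real \<Rightarrow> real \<Rightarrow> real \<Rightarrow> real" where
  "g31 \<phi> l r = (let \<gamma> = gam \<phi> l r in
     -2 * \<gamma>^2 + (1 / tan \<phi>) * (2 * arcsin \<gamma> - 2 * \<gamma> * sqrt (1 - \<gamma>^2)))"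

definition g32 :: "real \<Rightarrow> real \<Rightarrow> real \<Rightarrow> real" where
  "g32 \<phi> l r = (let \<gamma> = gam \<phi> l r in
     (1 / tan \<phi>) * (-2 * (- arcsin \<gamma> - \<phi> + 2*pi) - 2 * \<gamma> * sqrt (1 - \<gamma>^2) - sin (2*\<phi>))
     - 1 + 2 * \<gamma>^2 + cos (2*\<phi>))"

definition g33 :: "real \<Rightarrow> real \<Rightarrow> real \<Rightarrow> real" where
  "g33 \<phi> l r = l^2 * sin \<phi> / 2 *
     (zeta1 \<phi> l r * cos \<phi> - sin \<phi> * (ln \<bar>sin \<phi>\<bar> - ln (gam \<phi> l r)))"

definition g34 :: "real \<Rightarrow> real \<Rightarrow> real \<Rightarrow> real" where
  "g34 \<phi> l r = l^2 * sin \<phi> / 2 * (pi - 2 * arcsin (gam \<phi> l r)) * cos \<phi>"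

definition g3 :: "real \<Rightarrow> real \<Rightarrow> real \<Rightarrow> real" where
  "g3 \<phi> l r = l * r * (cos (pospart (zeta2 \<phi> l r)) - cos (zeta1 \<phi> l r))
     - r^2 / 8 * g31 \<phi> l r
     + (- (r^2 / 8 * g32 \<phi> l r) + g34 \<phi> l r) * of_bool (zeta2 \<phi> l r > 0)
     + g33 \<phi> l r * of_bool (zeta2 \<phi> l r \<le> 0)"

definition g4 :: "real \<Rightarrow> real \<Rightarrow> real \<Rightarrow> real" where
  "g4 \<phi> l r = l * r * (1 - cos (zeta1 \<phi> l r)) - r^2 / 8 * g31 \<phi> l r + g33 \<phi> l r"

end

theory Submission
  imports Defs
begin

lemma zeta2_nonpos:
  fixes \<phi> l r :: real
  assumes "3*pi/2 < \<phi>" "\<phi> < 2*pi" "0 < l" "l \<le> r"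
  shows "zeta2 \<phi> l r \<le> 0"
proof -
  define t where "t = 2*pi - \<phi>"
  have t0: "0 < t" "t < pi/2" using assms unfolding t_def by auto
  have st: "0 < sin t" using t0 by (intro sin_gt_zero) auto
  have st1: "sin t \<le> 1" by simp
  have r0: "0 < r" using assms by linarith
  have "gam \<phi> l r = l * sin t / r" unfolding gam_def t_def by simp
  moreover have "l * sin t / r \<le> sin t"
    using st assms r0 by (simp add: divide_le_eq mult_right_mono)
  moreover have "0 \<le> l * sin t / r" using st assms r0 by simp
  ultimately have g: "gam \<phi> l r \<le> sin t" "-1 \<le> gam \<phi> l r" by auto
  have "arcsin (gam \<phi> l r) \<le> arcsin (sin t)"
    using g st st1 by (intro arcsin_le_arcsin) auto
  also have "arcsin (sin t) = t" using t0 by (intro arcsin_sin) auto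
  finally show ?thesis unfolding zeta2_def t_def by simp
qed

theorem lemma2:
  fixes \<phi> l :: real
  assumes "pi < \<phi>" and "\<phi> < 2*pi" and "0 < l"
  shows "\<exists>\<epsilon>0>0. \<forall>\<epsilon>. 0 < \<epsilon> \<and> \<epsilon> < \<epsilon>0 \<longrightarrow>
           of_bool (C3 \<phi> l (l+\<epsilon>)) * g3 \<phi> l (l+\<epsilon>) + of_bool (C4 \<phi> l (l+\<epsilon>)) * g4 \<phi> l (l+\<epsilon>)
           = of_bool (C34 \<phi> l (l+\<epsilon>)) * g4 \<phi> l (l+\<epsilon>)"
proof (intro exI[of _ 1] conjI allI impI)
  fix e :: real assume e: "0 < e \<and> e < 1"
  show "of_bool (C3 \<phi> l (l+e)) * g3 \<phi> l (l+e) + of_bool (C4 \<phi> l (l+e)) * g4 \<phi> l (l+e)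
           = of_bool (C34 \<phi> l (l+e)) * g4 \<phi> l (l+e)"
  proof (cases "\<phi> \<le> 3*pi/2")
    case True
    then show ?thesis using assms e by (simp add: C3_def C4_def C34_def)
  next
    case False
    have "l * \<bar>sin \<phi>\<bar> \<le> l" using assms
      by (simp add: mult_left_le abs_sin_le_one)
    also have "... \<le> l + e" using e by simp
    finally have "l * \<bar>sin \<phi>\<bar> \<le> l + e" .
    hence c3: "C3 \<phi> l (l+e)" using False assms e by (simp add: C3_def)
    have z: "zeta2 \<phi> l (l+e) \<le> 0" using False assms e by (intro zeta2_nonpos) auto
    hence "pospart (zeta2 \<phi> l (l+e)) = 0" by (simp add: pospart_def)
    hence "g3 \<phi> l (l+e) = g4 \<phi> l (l+e)" using z by (simp add: g3_def g4_def)
    then show ?thesis using c3 False by (simp add: C4_def C34_def)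
  qed
qed simp

end
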